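(* Let $q$ be a real number with $q\notin\{0,1,-1\}$ and let $a,b\in\mathbb{C}$. Then, as identities of formal power series in $z$ (hence for $z$ in a neighborhood of $0$): (1) $\mathrm{E}_q(a,b;z)\,\mathrm{E}_q(b,a;-z)=1$; (2) $\mathrm{E}_{q^{-1}}(a,b;z)=\mathrm{E}_q(b,a;z)$; (3) $\mathrm{E}_q(1,-q;z)=\frac{1}{1-(1-q)z}$; (4) $\mathrm{E}_q(-q,1;z)=1+(1-q)z$.
   Context: $[n]_q=\frac{1-q^n}{1-q}$, $[0]_q!=1$, $[n]_q!=\prod_{k=1}^n[k]_q$. $(a\oplus b)^0_{1,q}=1$, $(a\oplus b)^n_{1,q}=\prod_{i=0}^{n-1}(a+bq^i)$. $\mathrm{E}_q(a,b;z)=\sum_{n=0}^\infty(a\oplus b)^n_{1,q}\frac{z^n}{[n]_q!}$. *)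

theory Defs
  imports "HOL-Computational_Algebra.Formal_Power_Series"
begin

definition qint :: "real \<Rightarrow> nat \<Rightarrow> real" where
  "qint q n = (1 - q ^ n) / (1 - q)"

definition qfact :: "real \<Rightarrow> nat \<Rightarrow> real" where
  "qfact q n = (\<Prod>k = 1..n. qint q k)"

definition qpow :: "complex \<Rightarrow> complex \<Rightarrow> real \<Rightarrow> nat \<Rightarrow> complex" where
  "qpow a b q n = (\<Prod>i<n. a + b * complex_of_real q ^ i)"

definition Eq :: "real \<Rightarrow> complex \<Rightarrow> complex \<Rightarrow> complex fps" where
  "Eq q a b = Abs_fps (\<lambda>n. qpow a b q n / complex_of_real (qfact q n))"

end

theory Submission
  imports Defs
begin

notation fps_nth (infixl "\<triangleright>" 75)

definition cf :: "real \<Rightarrow> complex \<Rightarrow> complex \<Rightarrow> nat \<Rightarrow> complex" where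
  "cf q a b n = qpow a b q n / complex_of_real (qfact q n)"

lemma Eq_nth: "Eq q a b \<triangleright> n = cf q a b n"
  by (simp add: Eq_def cf_def)

lemma qpow_0[simp]: "qpow a b q 0 = 1" by (simp add: qpow_def)
lemma qpow_Suc: "qpow a b q (Suc n) = qpow a b q n * (a + b * of_real q ^ n)"
  by (simp add: qpow_def)
lemma qfact_0[simp]: "qfact q 0 = 1" by (simp add: qfact_def)
lemma qfact_Suc: "qfact q (Suc n) = qfact q n * qint q (Suc n)"
  by (simp add: qfact_def prod.nat_ivl_Suc' mult.commute)

lemma qpow_ne1: assumes "q \<noteq> 1" "q \<noteq> -1" "n > 0" shows "(q::real) ^ n \<noteq> 1"
proof
  assume "q ^ n = 1"
  then have "\<bar>q\<bar> ^ n = 1" by (metis power_abs abs_one)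
  then have "\<bar>q\<bar> = 1" using assms(3) power_eq_iff_eq_base[of n "\<bar>q\<bar>" 1] by simp
  then show False using assms by auto
qed

lemma qint_nz: assumes "q \<noteq> 1" "q \<noteq> -1" "n > 0" shows "qint q n \<noteq> 0"
  using qpow_ne1[OF assms] assms by (simp add: qint_def)

lemma qfact_nz: assumes "q \<noteq> 1" "q \<noteq> -1" shows "qfact q n \<noteq> 0"
  using qint_nz[OF assms] by (simp add: qfact_def)

lemma cf_0[simp]: "cf q a b 0 = 1" by (simp add: cf_def)

lemma cf_Suc: assumes "q \<noteq> 1" "q \<noteq> -1"
  shows "cf q a b (Suc n) = cf q a b n * (a + b * of_real q ^ n) / of_real (qint q (Suc n))"
  using qfact_nz[OF assms, of n] qint_nz[OF assms, of "Suc n"]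
  by (simp add: cf_def qpow_Suc qfact_Suc field_simps)

lemma cf_rec: assumes "q \<noteq> 1" "q \<noteq> -1"
  shows "of_real (1 - q ^ Suc n) * cf q a b (Suc n) = of_real (1 - q) * (a + b * of_real q ^ n) * cf q a b n"
proof -
  have e: "of_real (1 - q ^ Suc n) = (of_real (1-q) * of_real (qint q (Suc n)) :: complex)"
    using assms by (simp add: qint_def)
  have nz: "(of_real (qint q (Suc n)) :: complex) \<noteq> 0" using qint_nz[OF assms, of "Suc n"] by simp
  have c: "of_real (qint q (Suc n)) * cf q a b (Suc n) = cf q a b n * (a + b * of_real q ^ n)"
    using cf_Suc[OF assms, of a b n] nz by simp
  show ?thesis unfolding e using c by (simp add: mult.assoc mult.commute mult.left_commute)
qed

definition S :: "real \<Rightarrow> complex fps \<Rightarrow> complex fps" where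
  "S q f = Abs_fps (\<lambda>n. of_real q ^ n * f \<triangleright> n)"

lemma S_mult: "S q (f * g) = S q f * S q g"
proof (rule fps_ext)
  fix n
  have "(S q (f * g)) \<triangleright> n = (\<Sum>i=0..n. of_real q ^ n * (f \<triangleright> i * g \<triangleright> (n - i)))"
    by (simp add: S_def fps_mult_nth sum_distrib_left)
  also have "\<dots> = (\<Sum>i=0..n. (of_real q ^ i * f \<triangleright> i) * (of_real q ^ (n - i) * g \<triangleright> (n - i)))"
  proof (rule sum.cong)
    fix i assume "i \<in> {0..n}"
    then have "(of_real q::complex) ^ n = of_real q ^ i * of_real q ^ (n-i)"
      by (simp flip: power_add)
    then show "of_real q ^ n * (f \<triangleright> i * g \<triangleright> (n - i)) = (of_real q ^ i * f \<triangleright> i) * (of_real q ^ (n - i) * g \<triangleright> (n - i))"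
      by (simp add: algebra_simps)
  qed simp
  also have "\<dots> = (S q f * S q g) \<triangleright> n" by (simp add: S_def fps_mult_nth)
  finally show "(S q (f * g)) \<triangleright> n = (S q f * S q g) \<triangleright> n" .
qed

lemma keyA: assumes "q \<noteq> 1" "q \<noteq> -1"
  shows "Eq q a b - S q (Eq q a b) = fps_const (of_real (1 - q)) * fps_X * (fps_const a * Eq q a b + fps_const b * S q (Eq q a b))"
proof (rule fps_ext)
  fix n show "(Eq q a b - S q (Eq q a b)) \<triangleright> n = (fps_const (of_real (1 - q)) * fps_X * (fps_const a * Eq q a b + fps_const b * S q (Eq q a b))) \<triangleright> n"
  proof (cases n)
    case 0 then show ?thesis by (simp add: S_def Eq_nth)
  next
    case (Suc m)
    have "(Eq q a b - S q (Eq q a b)) \<triangleright> n = of_real (1 - q ^ Suc m) * cf q a b (Suc m)"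
      by (simp add: S_def Eq_nth Suc algebra_simps)
    also have "\<dots> = of_real (1 - q) * (a + b * of_real q ^ m) * cf q a b m" by (rule cf_rec[OF assms])
    also have "\<dots> = (fps_const (of_real (1 - q)) * fps_X * (fps_const a * Eq q a b + fps_const b * S q (Eq q a b))) \<triangleright> n"
      by (simp add: S_def Eq_nth Suc mult.assoc algebra_simps)
    finally show ?thesis .
  qed
qed

lemma keyB: assumes "q \<noteq> 1" "q \<noteq> -1"
  shows "(Eq q b a oo - fps_X) - S q (Eq q b a oo - fps_X) = - (fps_const (of_real (1 - q)) * fps_X * (fps_const b * (Eq q b a oo - fps_X) + fps_const a * S q (Eq q b a oo - fps_X)))"
proof (rule fps_ext)
  fix n show "((Eq q b a oo - fps_X) - S q (Eq q b a oo - fps_X)) \<triangleright> n = (- (fps_const (of_real (1 - q)) * fps_X * (fps_const b * (Eq q b a oo - fps_X) + fps_const a * S q (Eq q b a oo - fps_X)))) \<triangleright> n"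
  proof (cases n)
    case 0 then show ?thesis by (simp add: S_def Eq_nth fps_compose_uminus')
  next
    case (Suc m)
    have "((Eq q b a oo - fps_X) - S q (Eq q b a oo - fps_X)) \<triangleright> n = (-1)^Suc m * (of_real (1 - q ^ Suc m) * cf q b a (Suc m))"
      by (simp add: S_def Eq_nth Suc algebra_simps fps_compose_uminus')
    also have "\<dots> = (-1)^Suc m * (of_real (1 - q) * (b + a * of_real q ^ m) * cf q b a m)" by (simp only: cf_rec[OF assms])
    also have "\<dots> = (- (fps_const (of_real (1 - q)) * fps_X * (fps_const b * (Eq q b a oo - fps_X) + fps_const a * S q (Eq q b a oo - fps_X)))) \<triangleright> n"
      by (simp add: S_def Eq_nth Suc algebra_simps fps_compose_uminus')
    finally show ?thesis .
  qed
qed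


lemma part1: assumes "q \<noteq> 1" "q \<noteq> -1"
  shows "Eq q a b * (Eq q b a oo (- fps_X)) = 1"
proof -
  define f where "f = Eq q a b"
  define g where "g = Eq q b a oo (- fps_X)"
  define C where "C = fps_const (complex_of_real (1 - q)) * fps_X"
  define h where "h = f * g"
  have A: "f - S q f = C * (fps_const a * f + fps_const b * S q f)"
    using keyA[OF assms, of a b] by (simp add: f_def C_def)
  have B: "g - S q g = - (C * (fps_const b * g + fps_const a * S q g))"
    using keyB[OF assms, of b a] by (simp add: g_def C_def)
  have "h - S q h = (f - S q f) * g + S q f * (g - S q g)"
    by (simp add: h_def S_mult algebra_simps)
  also have "\<dots> = fps_const a * C * (h - S q h)"
    unfolding A B by (simp add: h_def S_mult algebra_simps)
  finally have "(1 - fps_const a * C) * (h - S q h) = 0" by (simp add: algebra_simps)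
  moreover have "1 - fps_const a * C \<noteq> 0"
  proof
    assume "1 - fps_const a * C = 0"
    then have "(1 - fps_const a * C) \<triangleright> 0 = 0" by simp
    then show False by (simp add: C_def)
  qed
  ultimately have hS: "h - S q h = 0" by simp
  show ?thesis
  proof (rule fps_ext)
    fix n
    show "(Eq q a b * (Eq q b a oo - fps_X)) \<triangleright> n = 1 \<triangleright> n"
    proof (cases n)
      case 0 then show ?thesis by (simp add: Eq_nth)
    next
      case (Suc m)
      have "(h - S q h) \<triangleright> n = 0" using hS by simp
      then have "(1 - of_real q ^ n) * h \<triangleright> n = 0" by (simp add: S_def algebra_simps)
      moreover have "(1 - of_real q ^ n :: complex) \<noteq> 0"
      proof
        assume "(1 - of_real q ^ n :: complex) = 0"
        then have "(of_real (q ^ n) :: complex) = of_real 1" by simp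
        then have "q ^ n = 1" by (simp only: of_real_eq_iff)
        then show False using qpow_ne1[OF assms, of n] Suc by simp
      qed
      ultimately have "h \<triangleright> n = 0" by simp
      then show ?thesis using Suc by (simp add: h_def f_def g_def)
    qed
  qed
qed


lemma qint_inv: assumes "q \<noteq> 0" "q \<noteq> 1"
  shows "qint (inverse q) (Suc n) = qint q (Suc n) / q ^ n"
proof -
  have "1 - inverse q \<noteq> 0" using assms by (simp add: field_simps)
  then show ?thesis using assms unfolding qint_def
    by (simp add: field_simps power_inverse)
qed

lemma part2: assumes "q \<noteq> 0" "q \<noteq> 1" "q \<noteq> -1"
  shows "Eq (inverse q) a b = Eq q b a"
proof -
  have i1: "inverse q \<noteq> 1" "inverse q \<noteq> -1"
  proof -
    show "inverse q \<noteq> 1" using assms by (metis inverse_1 inverse_inverse_eq)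
    show "inverse q \<noteq> -1"
    proof
      assume "inverse q = -1"
      then have "q = inverse (-1)" by (metis inverse_inverse_eq)
      then show False using assms by simp
    qed
  qed
  have "cf (inverse q) a b n = cf q b a n" for n
  proof (induction n)
    case 0 then show ?case by simp
  next
    case (Suc n)
    have nz: "qint q (Suc n) \<noteq> 0" using qint_nz[OF assms(2,3)] by simp
    have "cf (inverse q) a b (Suc n) = cf q b a n * (a + b * of_real (inverse q) ^ n) / of_real (qint q (Suc n) / q ^ n)"
      by (simp add: cf_Suc[OF i1] Suc qint_inv[OF assms(1,2)])
    also have "\<dots> = cf q b a n * (b + a * of_real q ^ n) / of_real (qint q (Suc n))"
      using assms(1) nz by (simp add: field_simps power_inverse)
    also have "\<dots> = cf q b a (Suc n)" by (simp add: cf_Suc[OF assms(2,3)])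
    finally show ?case .
  qed
  then show ?thesis by (simp add: fps_eq_iff Eq_nth)
qed

lemma part3: assumes "q \<noteq> 1" "q \<noteq> -1"
  shows "Eq q 1 (- complex_of_real q) = inverse (1 - fps_const (complex_of_real (1 - q)) * fps_X)"
proof -
  have c: "cf q 1 (- complex_of_real q) n = of_real (1 - q) ^ n" for n
  proof (induction n)
    case 0 then show ?case by simp
  next
    case (Suc n)
    have nz: "qint q (Suc n) \<noteq> 0" using qint_nz[OF assms] by simp
    have e: "(1 - of_real q * of_real q ^ n :: complex) = of_real (1 - q) * of_real (qint q (Suc n))"
      using assms by (simp add: qint_def)
    show ?case using nz by (simp add: cf_Suc[OF assms] Suc e)
  qed
  have "(1 - fps_const (complex_of_real (1 - q)) * fps_X) * Eq q 1 (- complex_of_real q) = 1"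
  proof (rule fps_ext)
    fix n show "((1 - fps_const (complex_of_real (1 - q)) * fps_X) * Eq q 1 (- complex_of_real q)) \<triangleright> n = 1 \<triangleright> n"
      by (cases n) (simp_all add: algebra_simps Eq_nth c)
  qed
  from fps_inverse_unique[OF this] show ?thesis by simp
qed

lemma part4: assumes "q \<noteq> 1" "q \<noteq> -1"
  shows "Eq q (- complex_of_real q) 1 = 1 + fps_const (complex_of_real (1 - q)) * fps_X"
proof (rule fps_ext)
  fix n
  show "Eq q (- complex_of_real q) 1 \<triangleright> n = (1 + fps_const (complex_of_real (1 - q)) * fps_X) \<triangleright> n"
  proof (cases "n \<le> 1")
    case True
    then consider "n = 0" | "n = 1" by linarith
    then show ?thesis
      by cases (simp_all add: Eq_nth cf_Suc[OF assms, where n=0, simplified] qint_def)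
  next
    case False
    have "qpow (- complex_of_real q) 1 q n = 0" unfolding qpow_def
      by (rule prod_zero) (use False in \<open>auto intro!: bexI[of _ 1]\<close>)
    then show ?thesis using False by (simp add: Eq_nth cf_def)
  qed
qed

theorem mainTheorem15:
  fixes q :: real and a b :: complex
  assumes "q \<noteq> 0" and "q \<noteq> 1" and "q \<noteq> -1"
  shows "Eq q a b * (Eq q b a oo (- fps_X)) = 1
       \<and> Eq (inverse q) a b = Eq q b a
       \<and> Eq q 1 (- complex_of_real q) = inverse (1 - fps_const (complex_of_real (1 - q)) * fps_X)
       \<and> Eq q (- complex_of_real q) 1 = 1 + fps_const (complex_of_real (1 - q)) * fps_X"
  using part1[OF assms(2,3)] part2[OF assms] part3[OF assms(2,3)] part4[OF assms(2,3)] by blast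

end
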